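(* Let $(M,\cdot)$ be a moving semigroup and $A\subseteq M$. Then $A$ is DIP if and only if there is a nonprincipal idempotent ultrafilter $\mathcal{U}$ on $M$ with $A\in\mathcal{U}$.
   Context: $\beta M$ is the Stone–Čech compactification of the discrete semigroup $M$ (the space of ultrafilters on $M$, with principal ultrafilters identified with elements of $M$), equipped with the usual extension of the semigroup operation. $(M,\cdot)$ is moving if $\beta M\setminus M$ is a subsemigroup of $\beta M$. An ultrafilter $\mathcal{U}$ is idempotent if $\mathcal{U}\cdot\mathcal{U}=\mathcal{U}$ in $\beta M$. For a sequence $(x_n)$ in $M$, $\mathrm{FP}(x_n)=\{x_{i_1}\cdots x_{i_k}: k\ge1,\ i_1<\cdots<i_k\}$. A set $A\subseteq M$ is DIP (distinctly IP) if there is an injective sequence $(x_n)$ in $M$ with $\mathrm{FP}(x_n)\subseteq A$. *)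

theory Defs
  imports Main
begin

definition is_ultrafilter :: "'a set set \<Rightarrow> bool" where
  "is_ultrafilter U \<longleftrightarrow>
     UNIV \<in> U \<and> {} \<notin> U \<and>
     (\<forall>A B. A \<in> U \<and> B \<in> U \<longrightarrow> A \<inter> B \<in> U) \<and>
     (\<forall>A B. A \<in> U \<and> A \<subseteq> B \<longrightarrow> B \<in> U) \<and>
     (\<forall>A. A \<in> U \<or> - A \<in> U)"

definition principal_uf :: "'a \<Rightarrow> 'a set set" where
  "principal_uf x = {A. x \<in> A}"

definition nonprincipal :: "'a set set \<Rightarrow> bool" where
  "nonprincipal U \<longleftrightarrow> (\<forall>x. U \<noteq> principal_uf x)"

definition uf_mult :: "'a::semigroup_mult set set \<Rightarrow> 'a set set \<Rightarrow> 'a set set" where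
  "uf_mult U V = {A. {x. {y. x * y \<in> A} \<in> V} \<in> U}"

definition idempotent_uf :: "'a::semigroup_mult set set \<Rightarrow> bool" where
  "idempotent_uf U \<longleftrightarrow> uf_mult U U = U"

text \<open>Moving: beta M \ M is a subsemigroup of beta M.\<close>
definition moving :: "'a::semigroup_mult itself \<Rightarrow> bool" where
  "moving (t::'a itself) \<longleftrightarrow> (\<forall>(U::'a set set) V. is_ultrafilter U \<and> nonprincipal U \<and> is_ultrafilter V \<and> nonprincipal V
      \<longrightarrow> nonprincipal (uf_mult U V))"

fun lprod :: "'a::semigroup_mult list \<Rightarrow> 'a" where
  "lprod [a] = a"
| "lprod (a # b # l) = a * lprod (b # l)"
| "lprod [] = undefined"

definition FP :: "(nat \<Rightarrow> 'a::semigroup_mult) \<Rightarrow> 'a set" where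
  "FP x = {lprod (map x is) | is. is \<noteq> [] \<and> sorted_wrt (<) is}"

definition DIP :: "'a::semigroup_mult set \<Rightarrow> bool" where
  "DIP A \<longleftrightarrow> (\<exists>x. inj x \<and> FP x \<subseteq> A)"

end

theory Submission imports Defs begin

definition fip :: "'a set set \<Rightarrow> bool" where
  "fip G \<longleftrightarrow> (\<forall>S. finite S \<and> S \<subseteq> G \<longrightarrow> \<Inter>S \<noteq> {})"

lemma uf_props:
  assumes "is_ultrafilter U"
  shows "UNIV \<in> U" "{} \<notin> U" "A \<in> U \<Longrightarrow> B \<in> U \<Longrightarrow> A \<inter> B \<in> U"
    "A \<in> U \<Longrightarrow> A \<subseteq> B \<Longrightarrow> B \<in> U" "A \<in> U \<or> - A \<in> U"
  using assms unfolding is_ultrafilter_def by blast+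

lemma uf_compl: "is_ultrafilter U \<Longrightarrow> (- A \<in> U) \<longleftrightarrow> A \<notin> U"
  by (metis Compl_disjoint uf_props(2,3,5))

lemma uf_Inter: "finite S \<Longrightarrow> is_ultrafilter U \<Longrightarrow> S \<subseteq> U \<Longrightarrow> \<Inter>S \<in> U"
  by (induction S rule: finite_induct) (auto intro: uf_props)

lemma uf_sub_eq: "is_ultrafilter U \<Longrightarrow> is_ultrafilter V \<Longrightarrow> U \<subseteq> V \<Longrightarrow> U = V"
  by (metis subsetI subset_antisym uf_compl subsetD)

lemma uf_mult_ultra:
  assumes U: "is_ultrafilter U" and V: "is_ultrafilter V"
  shows "is_ultrafilter (uf_mult U V)"
proof -
  have e1: "{x. {y. x * y \<in> A \<inter> B} \<in> V} = {x. {y. x * y \<in> A} \<in> V} \<inter> {x. {y. x * y \<in> B} \<in> V}" for A B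
  proof -
    have "{y. x * y \<in> A \<inter> B} = {y. x * y \<in> A} \<inter> {y. x * y \<in> B}" for x by auto
    then show ?thesis using uf_props[OF V] by (auto simp del: Int_iff)
  qed
  have e2: "{x. {y. x * y \<in> - A} \<in> V} = - {x. {y. x * y \<in> A} \<in> V}" for A
  proof -
    have "{y. x * y \<in> - A} = - {y. x * y \<in> A}" for x by auto
    then show ?thesis using uf_compl[OF V] by auto
  qed
  show ?thesis unfolding is_ultrafilter_def uf_mult_def
  proof (intro conjI allI impI)
    show "UNIV \<in> {A. {x. {y. x * y \<in> A} \<in> V} \<in> U}" using uf_props[OF U] uf_props[OF V] by simp
    show "{} \<notin> {A. {x. {y. x * y \<in> A} \<in> V} \<in> U}" using uf_props[OF U] uf_props[OF V] by simp
  next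
    fix A B assume "A \<in> {A. {x. {y. x * y \<in> A} \<in> V} \<in> U} \<and> B \<in> {A. {x. {y. x * y \<in> A} \<in> V} \<in> U}"
    then show "A \<inter> B \<in> {A. {x. {y. x * y \<in> A} \<in> V} \<in> U}" using e1 uf_props(3)[OF U] by simp
  next
    fix A B assume h: "A \<in> {A. {x. {y. x * y \<in> A} \<in> V} \<in> U} \<and> A \<subseteq> B"
    have "{x. {y. x * y \<in> A} \<in> V} \<subseteq> {x. {y. x * y \<in> B} \<in> V}"
      using h uf_props(4)[OF V] by (smt (verit) mem_Collect_eq subset_iff)
    then show "B \<in> {A. {x. {y. x * y \<in> A} \<in> V} \<in> U}" using h uf_props(4)[OF U] by auto
  next
    fix A show "A \<in> {A. {x. {y. x * y \<in> A} \<in> V} \<in> U} \<or> - A \<in> {A. {x. {y. x * y \<in> A} \<in> V} \<in> U}"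
      using e2 uf_props(5)[OF U] by auto
  qed
qed

lemma uf_mult_assoc: "uf_mult (uf_mult U V) W = uf_mult U (uf_mult V W)"
  unfolding uf_mult_def by (simp add: mult.assoc)

lemma fip_insert:
  assumes "fip H" "\<not> fip (insert A H)"
  shows "\<exists>S. finite S \<and> S \<subseteq> H \<and> \<Inter>S \<inter> A = {}"
proof -
  obtain S' where S': "finite S'" "S' \<subseteq> insert A H" "\<Inter>S' = {}" using assms(2) unfolding fip_def by blast
  then show ?thesis by (intro exI[of _ "S' - {A}"]) auto
qed

lemma ultrafilter_lemma:
  assumes "fip G"
  shows "\<exists>U. is_ultrafilter U \<and> G \<subseteq> U"
proof -
  let ?A = "{H. G \<subseteq> H \<and> fip H}"
  have "\<exists>M\<in>?A. \<forall>X\<in>?A. M \<subseteq> X \<longrightarrow> X = M"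
  proof (rule subset_Zorn_nonempty)
    show "?A \<noteq> {}" using assms by blast
  next
    fix C assume C: "C \<noteq> {}" "subset.chain ?A C"
    have "fip (\<Union>C)" unfolding fip_def
    proof (intro allI impI)
      fix S assume S: "finite S \<and> S \<subseteq> \<Union>C"
      obtain B where "B \<in> C" "S \<subseteq> B" using finite_subset_Union_chain[of S C ?A] S C by blast
      then show "\<Inter>S \<noteq> {}" using C S unfolding subset_chain_def fip_def by blast
    qed
    then show "\<Union>C \<in> ?A" using C unfolding subset_chain_def by blast
  qed
  then obtain H where H0: "H \<in> ?A" and max0: "\<forall>X\<in>?A. H \<subseteq> X \<longrightarrow> X = H" by blast
  have H: "G \<subseteq> H" "fip H" using H0 by simp_all
  have max: "X = H" if "G \<subseteq> X" "fip X" "H \<subseteq> X" for X using max0 that by simp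
  have compl: "A \<in> H \<or> - A \<in> H" for A
  proof (cases "fip (insert A H)")
    case True then show ?thesis using max[of "insert A H"] H by blast
  next
    case False
    then obtain S where S: "finite S" "S \<subseteq> H" "\<Inter>S \<inter> A = {}" using fip_insert[OF H(2) False] by blast
    show ?thesis
    proof (cases "fip (insert (-A) H)")
      case True then show ?thesis using max[of "insert (-A) H"] H by blast
    next
      case False
      then obtain T where T: "finite T" "T \<subseteq> H" "\<Inter>T \<inter> -A = {}" using fip_insert[OF H(2) False] by blast
      have "\<Inter>(S \<union> T) = {}" using S T by blast
      then show ?thesis using H(2) S T unfolding fip_def by (meson finite_UnI le_sup_iff)
    qed
  qed
  have emp: "{} \<notin> H" using H(2) unfolding fip_def by (metis cInf_singleton empty_subsetI finite.emptyI finite.insertI insert_subset)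
  have fin2: "\<Inter>S \<noteq> {}" if "finite S" "S \<subseteq> H" for S using H(2) that unfolding fip_def by blast
  have "is_ultrafilter H" unfolding is_ultrafilter_def
  proof (intro conjI allI impI)
    show "UNIV \<in> H" using compl[of UNIV] emp by simp
    show "{} \<notin> H" by (rule emp)
  next
    fix A B assume h: "A \<in> H \<and> B \<in> H"
    show "A \<inter> B \<in> H"
    proof (rule ccontr)
      assume "A \<inter> B \<notin> H" then have "- (A \<inter> B) \<in> H" using compl by blast
      then show False using fin2[of "{A, B, -(A \<inter> B)}"] h by auto
    qed
  next
    fix A B assume h: "A \<in> H \<and> A \<subseteq> B"
    show "B \<in> H"
    proof (rule ccontr)
      assume "B \<notin> H" then have "- B \<in> H" using compl by blast
      then show False using fin2[of "{A, -B}"] h by auto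
    qed
  next
    fix A show "A \<in> H \<or> - A \<in> H" by (rule compl)
  qed
  then show ?thesis using H by blast
qed


definition closed_uf :: "'a set set set \<Rightarrow> bool" where
  "closed_uf C \<longleftrightarrow> (\<forall>U\<in>C. is_ultrafilter U) \<and> (\<forall>U. is_ultrafilter U \<and> \<Inter>C \<subseteq> U \<longrightarrow> U \<in> C)"

lemma closed_cl: "closed_uf {U. is_ultrafilter U \<and> F \<subseteq> U}"
  unfolding closed_uf_def by blast

lemma closed_Int: "closed_uf X \<Longrightarrow> closed_uf Y \<Longrightarrow> closed_uf (X \<inter> Y)"
  unfolding closed_uf_def by (meson Inter_anti_mono inf_le1 inf_le2 IntI IntD1 order_trans)

lemma closed_Inter:
  assumes "C \<noteq> {}" "\<And>T. T \<in> C \<Longrightarrow> closed_uf T"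
  shows "closed_uf (\<Inter>C)"
  unfolding closed_uf_def
proof (intro conjI allI impI ballI)
  fix U assume "U \<in> \<Inter>C" then show "is_ultrafilter U" using assms unfolding closed_uf_def by blast
next
  fix U assume U: "is_ultrafilter U \<and> \<Inter>(\<Inter>C) \<subseteq> U"
  show "U \<in> \<Inter>C"
  proof
    fix T assume T: "T \<in> C"
    have "\<Inter>T \<subseteq> \<Inter>(\<Inter>C)" using T by (intro Inter_anti_mono) blast
    moreover have "\<forall>U. is_ultrafilter U \<and> \<Inter>T \<subseteq> U \<longrightarrow> U \<in> T" using assms(2)[OF T] unfolding closed_uf_def by blast
    ultimately show "U \<in> T" using U by (meson order_trans)
  qed
qed

lemma compactness:
  assumes C: "C \<noteq> {}" "subset.chain UNIV C" "\<And>T. T \<in> C \<Longrightarrow> closed_uf T \<and> T \<noteq> {}"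
  shows "\<Inter>C \<noteq> {}"
proof -
  let ?G = "\<Union>(Inter ` C)"
  have ch: "subset.chain UNIV (Inter ` C)" using C(2) unfolding subset_chain_def
    by (simp add: ball_simps) (metis Inter_anti_mono)
  have "fip ?G" unfolding fip_def
  proof (intro allI impI)
    fix S assume S: "finite S \<and> S \<subseteq> ?G"
    obtain B where B: "B \<in> Inter ` C" "S \<subseteq> B" using finite_subset_Union_chain[of S "Inter ` C" UNIV] S ch C(1) by blast
    then obtain T where T: "T \<in> C" "B = \<Inter>T" by blast
    then obtain U where U: "U \<in> T" using C(3) by blast
    have Uu: "is_ultrafilter U" using C(3)[OF T(1)] U unfolding closed_uf_def by blast
    have "S \<subseteq> U" using B T U by blast
    then have "\<Inter>S \<in> U" using uf_Inter S Uu by blast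
    then show "\<Inter>S \<noteq> {}" using uf_props(2)[OF Uu] by metis
  qed
  then obtain W where W: "is_ultrafilter W" "?G \<subseteq> W" using ultrafilter_lemma by blast
  have "W \<in> T" if "T \<in> C" for T
    using C(3)[OF that] W that unfolding closed_uf_def by blast
  then show ?thesis by blast
qed

abbreviation gset :: "'a::semigroup_mult set set \<Rightarrow> 'a set \<Rightarrow> 'a set" where
  "gset p A \<equiv> {x. {y. x * y \<in> A} \<in> p}"

lemma gset_compl: "is_ultrafilter p \<Longrightarrow> gset p (- A) = - gset p A"
proof -
  assume p: "is_ultrafilter p"
  have "{y. x * y \<in> - A} = - {y. x * y \<in> A}" for x by auto
  then show ?thesis using uf_compl[OF p] by auto
qed

lemma in_uf_mult: "A \<in> uf_mult U p \<longleftrightarrow> gset p A \<in> U"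
  unfolding uf_mult_def by simp

lemma image_closed:
  fixes T :: "'a::semigroup_mult set set set"
  assumes T: "closed_uf T" and p: "is_ultrafilter p"
  shows "closed_uf ((\<lambda>U. uf_mult U p) ` T)"
  unfolding closed_uf_def
proof (intro conjI allI impI ballI)
  fix V assume "V \<in> (\<lambda>U. uf_mult U p) ` T"
  then show "is_ultrafilter V" using T p uf_mult_ultra unfolding closed_uf_def by blast
next
  fix V assume V: "is_ultrafilter V \<and> \<Inter>((\<lambda>U. uf_mult U p) ` T) \<subseteq> V"
  let ?H = "\<Inter>T \<union> gset p ` V"
  have "fip ?H" unfolding fip_def
  proof (intro allI impI notI)
    fix S assume S: "finite S \<and> S \<subseteq> ?H" and E: "\<Inter>S = {}"
    define S1 where "S1 = S \<inter> \<Inter>T"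
    have "finite (S - \<Inter>T)" "S - \<Inter>T \<subseteq> gset p ` V" using S by auto
    then obtain Af where Af: "Af \<subseteq> V" "finite Af" "S - \<Inter>T = gset p ` Af"
      using finite_subset_image[of "S - \<Inter>T" "gset p" V] by blast
    define A where "A = \<Inter>Af"
    have AV: "A \<in> V" unfolding A_def using uf_Inter Af V by blast
    have sub: "gset p A \<subseteq> \<Inter>(gset p ` Af)"
    proof
      fix x assume x: "x \<in> gset p A"
      show "x \<in> \<Inter>(gset p ` Af)"
      proof
        fix A' assume A': "A' \<in> Af"
        have "{y. x * y \<in> A} \<subseteq> {y. x * y \<in> A'}" using A' unfolding A_def by blast
        then show "x \<in> gset p A'" using x uf_props(4)[OF p] by blast
      qed
    qed
    have "S = S1 \<union> gset p ` Af" using Af unfolding S1_def by blast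
    then have disj: "\<Inter>S1 \<inter> gset p A = {}" using E sub by auto
    have "- A \<in> uf_mult U p" if U: "U \<in> T" for U
    proof -
      have Uu: "is_ultrafilter U" using T U unfolding closed_uf_def by blast
      have "S1 \<subseteq> U" using U unfolding S1_def by blast
      then have "\<Inter>S1 \<in> U" using uf_Inter Uu S unfolding S1_def by blast
      then have "gset p A \<notin> U" using disj uf_props(2,3)[OF Uu] by metis
      then show ?thesis using in_uf_mult gset_compl[OF p] uf_compl[OF Uu] by metis
    qed
    then have "- A \<in> V" using V by blast
    then show False using AV V uf_compl by blast
  qed
  then obtain W where W: "is_ultrafilter W" "?H \<subseteq> W" using ultrafilter_lemma by blast
  have WT: "W \<in> T" using T W unfolding closed_uf_def by blast
  have "V \<subseteq> uf_mult W p" using W in_uf_mult by blast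
  then have "V = uf_mult W p" using uf_sub_eq V uf_mult_ultra W p by blast
  then show "V \<in> (\<lambda>U. uf_mult U p) ` T" using WT by blast
qed

lemma fix_closed:
  fixes p :: "'a::semigroup_mult set set"
  assumes p: "is_ultrafilter p"
  shows "closed_uf {q. is_ultrafilter q \<and> uf_mult q p = p}"
proof -
  have "{q. is_ultrafilter q \<and> uf_mult q p = p} = {q. is_ultrafilter q \<and> gset p ` p \<subseteq> q}"
  proof (intro set_eqI iffI)
    fix q assume "q \<in> {q. is_ultrafilter q \<and> uf_mult q p = p}"
    then show "q \<in> {q. is_ultrafilter q \<and> gset p ` p \<subseteq> q}" using in_uf_mult by blast
  next
    fix q assume q: "q \<in> {q. is_ultrafilter q \<and> gset p ` p \<subseteq> q}"
    then have "p \<subseteq> uf_mult q p" using in_uf_mult by blast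
    moreover have "is_ultrafilter (uf_mult q p)" using q p uf_mult_ultra by blast
    ultimately have "p = uf_mult q p" using uf_sub_eq[OF p] by blast
    then show "q \<in> {q. is_ultrafilter q \<and> uf_mult q p = p}" using q by simp
  qed
  then show ?thesis using closed_cl[of "gset p ` p"] by simp
qed

lemma minimal_Zorn:
  assumes "\<A> \<noteq> {}" and ch: "\<And>\<C>. \<C> \<noteq> {} \<Longrightarrow> subset.chain \<A> \<C> \<Longrightarrow> \<Inter>\<C> \<in> \<A>"
  shows "\<exists>M\<in>\<A>. \<forall>X\<in>\<A>. X \<subseteq> M \<longrightarrow> X = M"
proof -
  have "\<exists>M\<in>uminus ` \<A>. \<forall>X\<in>uminus ` \<A>. M \<subseteq> X \<longrightarrow> X = M"
  proof (rule subset_Zorn_nonempty)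
    show "uminus ` \<A> \<noteq> {}" using assms by blast
  next
    fix \<C> assume C: "\<C> \<noteq> {}" "subset.chain (uminus ` \<A>) \<C>"
    have "subset.chain \<A> (uminus ` \<C>)" using C(2) unfolding subset_chain_def by auto
    then have "\<Inter>(uminus ` \<C>) \<in> \<A>" by (rule ch[rotated]) (use C(1) in simp)
    moreover have "\<Union>\<C> = - \<Inter>(uminus ` \<C>)" by auto
    ultimately show "\<Union>\<C> \<in> uminus ` \<A>" by (metis image_eqI)
  qed
  then obtain M' where M': "M' \<in> uminus ` \<A>" and mx: "\<forall>X\<in>uminus ` \<A>. M' \<subseteq> X \<longrightarrow> X = M'" by blast
  then obtain M where M: "M \<in> \<A>" "M' = - M" by blast
  have "X = M" if X: "X \<in> \<A>" "X \<subseteq> M" for X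
  proof -
    have "- X \<in> uminus ` \<A>" using X by blast
    moreover have "M' \<subseteq> - X" using X M by blast
    ultimately have "- X = - M" using mx M by blast
    then show ?thesis by simp
  qed
  then show ?thesis using M by blast
qed

lemma ellis:
  fixes S :: "'a::semigroup_mult set set set"
  assumes S: "S \<noteq> {}" "closed_uf S" "\<And>U V. U \<in> S \<Longrightarrow> V \<in> S \<Longrightarrow> uf_mult U V \<in> S"
  shows "\<exists>U\<in>S. uf_mult U U = U"
proof -
  let ?A = "{T. T \<subseteq> S \<and> T \<noteq> {} \<and> closed_uf T \<and> (\<forall>U\<in>T. \<forall>V\<in>T. uf_mult U V \<in> T)}"
  have "\<exists>M\<in>?A. \<forall>X\<in>?A. X \<subseteq> M \<longrightarrow> X = M"
  proof (rule minimal_Zorn)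
    show "?A \<noteq> {}" using S by blast
  next
    fix C assume C: "C \<noteq> {}" "subset.chain ?A C"
    have "\<Inter>C \<noteq> {}"
    proof (rule compactness)
      show "C \<noteq> {}" by (rule C(1))
      show "subset.chain UNIV C" using C(2) unfolding subset_chain_def by blast
      show "closed_uf T \<and> T \<noteq> {}" if "T \<in> C" for T using C(2) that unfolding subset_chain_def by blast
    qed
    moreover have "closed_uf (\<Inter>C)"
    proof (rule closed_Inter)
      show "C \<noteq> {}" by (rule C(1))
      show "closed_uf T" if "T \<in> C" for T using C(2) that unfolding subset_chain_def by blast
    qed
    moreover have "\<Inter>C \<subseteq> S"
    proof -
      obtain T0 where T0: "T0 \<in> C" using C(1) by blast
      then have "T0 \<subseteq> S" using C(2) unfolding subset_chain_def by blast
      then show ?thesis using T0 by (meson Inter_lower order_trans)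
    qed
    moreover have "\<forall>U\<in>\<Inter>C. \<forall>V\<in>\<Inter>C. uf_mult U V \<in> \<Inter>C" using C(2) unfolding subset_chain_def by blast
    ultimately show "\<Inter>C \<in> ?A" by blast
  qed
  then obtain T where T: "T \<in> ?A" and min0: "\<forall>X\<in>?A. X \<subseteq> T \<longrightarrow> X = T" by blast
  have min: "X = T" if "X \<in> ?A" "X \<subseteq> T" for X using min0 that by simp
  have "T \<noteq> {}" using T by simp
  then obtain p where pT: "p \<in> T" by blast
  have Tu: "\<And>U. U \<in> T \<Longrightarrow> is_ultrafilter U" using T unfolding closed_uf_def by blast
  have p: "is_ultrafilter p" using Tu pT by blast
  let ?Tp = "(\<lambda>U. uf_mult U p) ` T"
  have Tsemi: "uf_mult U V \<in> T" if "U \<in> T" "V \<in> T" for U V using T that by simp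
  have Tcl: "closed_uf T" and TS: "T \<subseteq> S" using T by simp_all
  have TpT: "?Tp \<subseteq> T" using Tsemi pT by blast
  have "?Tp \<in> ?A"
  proof -
    have "\<forall>U\<in>?Tp. \<forall>V\<in>?Tp. uf_mult U V \<in> ?Tp"
    proof (intro ballI)
      fix U V assume "U \<in> ?Tp" "V \<in> ?Tp"
      then obtain u v where uv: "u \<in> T" "v \<in> T" "U = uf_mult u p" "V = uf_mult v p" by blast
      have "uf_mult U V = uf_mult (uf_mult (uf_mult u p) v) p" using uv by (simp add: uf_mult_assoc)
      moreover have "uf_mult (uf_mult u p) v \<in> T" using Tsemi uv pT by blast
      ultimately show "uf_mult U V \<in> ?Tp" by blast
    qed
    moreover have "closed_uf ?Tp" using image_closed[OF Tcl p] .
    moreover have "?Tp \<noteq> {}" using pT by blast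
    moreover have "?Tp \<subseteq> S" using TpT TS by blast
    ultimately show ?thesis by simp
  qed
  then have "?Tp = T" using min TpT by blast
  then have "p \<in> ?Tp" using pT by simp
  then obtain q0 where q0: "q0 \<in> T" "uf_mult q0 p = p" by blast
  let ?X = "T \<inter> {q. is_ultrafilter q \<and> uf_mult q p = p}"
  have XT: "?X \<subseteq> T" by blast
  have "?X \<in> ?A"
  proof -
    have "closed_uf ?X" using closed_Int[OF Tcl fix_closed[OF p]] .
    moreover have "?X \<noteq> {}" using q0 Tu by blast
    moreover have "\<forall>U\<in>?X. \<forall>V\<in>?X. uf_mult U V \<in> ?X"
    proof (intro ballI)
      fix U V assume U: "U \<in> ?X" and V: "V \<in> ?X"
      have "uf_mult (uf_mult U V) p = p" using U V by (simp add: uf_mult_assoc)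
      moreover have "uf_mult U V \<in> T" using Tsemi U V by blast
      ultimately show "uf_mult U V \<in> ?X" using Tu by blast
    qed
    moreover have "?X \<subseteq> S" using XT TS by blast
    ultimately show ?thesis by simp
  qed
  then have "?X = T" using min XT by blast
  then have "uf_mult p p = p" using pT by blast
  then show ?thesis using pT T by blast
qed


lemma lprod_append: "xs \<noteq> [] \<Longrightarrow> ys \<noteq> [] \<Longrightarrow> lprod (xs @ ys) = lprod xs * lprod ys"
proof (induction xs rule: lprod.induct)
  case (1 a) then show ?case by (cases ys) auto
next
  case (2 a b l) then show ?case by (simp add: mult.assoc)
qed simp

lemma nonprinc_single:
  assumes U: "is_ultrafilter U" "nonprincipal U"
  shows "- {a} \<in> U"
proof (rule ccontr)
  assume "- {a} \<notin> U"
  then have a: "{a} \<in> U" using uf_compl[OF U(1)] by (metis double_compl)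
  have "U = principal_uf a" unfolding principal_uf_def
  proof (intro set_eqI iffI)
    fix B assume "B \<in> U"
    then have "B \<inter> {a} \<in> U" using a uf_props(3)[OF U(1)] by blast
    then show "B \<in> {A. a \<in> A}" using uf_props(2)[OF U(1)] by (metis Int_insert_right_if0 inf_bot_right mem_Collect_eq)
  next
    fix B assume "B \<in> {A. a \<in> A}"
    then show "B \<in> U" using a uf_props(4)[OF U(1)] by blast
  qed
  then show False using U(2) unfolding nonprincipal_def by blast
qed

lemma nonprinc_cofinite:
  assumes U: "is_ultrafilter U" "nonprincipal U" and F: "finite F"
  shows "- F \<in> U"
  using F
proof (induction F rule: finite_induct)
  case empty then show ?case using uf_props(1)[OF U(1)] by simp
next
  case (insert a F)
  have "- insert a F = - F \<inter> - {a}" by auto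
  then show ?case using insert nonprinc_single[OF U] uf_props(3)[OF U(1)] by metis
qed

lemma nonprinc_nonempty:
  assumes U: "is_ultrafilter U" "nonprincipal U" and B: "B \<in> U" and F: "finite F"
  shows "\<exists>y\<in>B. y \<notin> F"
proof -
  have "B \<inter> - F \<in> U" using nonprinc_cofinite[OF U F] B uf_props(3)[OF U(1)] by blast
  then have "B \<inter> - F \<noteq> {}" using uf_props(2)[OF U(1)] by metis
  then show ?thesis by blast
qed

section \<open>Backward direction (Galvin-Glazer)\<close>

context
  fixes U :: "'a::semigroup_mult set set"
  assumes U: "is_ultrafilter U" "nonprincipal U" "idempotent_uf U"
begin

definition star :: "'a set \<Rightarrow> 'a set" where
  "star B = {y \<in> B. {z. y * z \<in> B} \<in> U}"

lemma star_in: "B \<in> U \<Longrightarrow> star B \<in> U"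
proof -
  assume B: "B \<in> U"
  then have "B \<in> uf_mult U U" using U(3) unfolding idempotent_uf_def by simp
  then have "{y. {z. y * z \<in> B} \<in> U} \<in> U" unfolding uf_mult_def by simp
  then have "B \<inter> {y. {z. y * z \<in> B} \<in> U} \<in> U" using B uf_props(3)[OF U(1)] by blast
  moreover have "B \<inter> {y. {z. y * z \<in> B} \<in> U} = star B" unfolding star_def by blast
  ultimately show ?thesis by simp
qed

lemma star_good: "B \<in> U \<Longrightarrow> y \<in> star B \<Longrightarrow> {z. y * z \<in> star B} \<in> U"
proof -
  assume B: "B \<in> U" and y: "y \<in> star B"
  have yB: "{z. y * z \<in> B} \<in> U" using y unfolding star_def by blast
  have "{z. {w. z * w \<in> {v. y * v \<in> B}} \<in> U} \<in> U"
    by (rule uf_props(4)[OF U(1) star_in[OF yB]]) (auto simp: star_def)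
  then have "{z. {w. (y * z) * w \<in> B} \<in> U} \<in> U" by (simp add: mult.assoc)
  then have "{z. y * z \<in> B} \<inter> {z. {w. (y * z) * w \<in> B} \<in> U} \<in> U" using yB uf_props(3)[OF U(1)] by blast
  moreover have "{z. y * z \<in> B} \<inter> {z. {w. (y * z) * w \<in> B} \<in> U} = {z. y * z \<in> star B}"
    unfolding star_def by blast
  ultimately show ?thesis by simp
qed

lemma star_sub: "star B \<subseteq> B" unfolding star_def by blast

definition pick :: "'a set \<Rightarrow> 'a" where "pick C = (SOME y. y \<in> C)"

definition nxt :: "'a set \<Rightarrow> 'a set" where
  "nxt C = star (C \<inter> {z. pick C * z \<in> C} \<inter> - {pick C})"

definition good :: "'a set \<Rightarrow> bool" where
  "good C \<longleftrightarrow> C \<in> U \<and> (\<forall>y\<in>C. {z. y * z \<in> C} \<in> U)"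

lemma good_star: "B \<in> U \<Longrightarrow> good (star B)"
  unfolding good_def using star_in star_good by blast

lemma pick_in: "C \<in> U \<Longrightarrow> pick C \<in> C"
  unfolding pick_def using uf_props(2)[OF U(1)] by (metis ex_in_conv someI_ex)

lemma good_nxt: "good C \<Longrightarrow> good (nxt C)"
proof -
  assume g: "good C"
  have "pick C \<in> C" using g pick_in unfolding good_def by blast
  then have "{z. pick C * z \<in> C} \<in> U" using g unfolding good_def by blast
  then have "C \<inter> {z. pick C * z \<in> C} \<inter> - {pick C} \<in> U"
    using g nonprinc_single[OF U(1,2)] uf_props(3)[OF U(1)] unfolding good_def by blast
  then show ?thesis unfolding nxt_def by (rule good_star)
qed

lemma DIP_of_U:
  assumes A: "A \<in> U"
  shows "DIP A"
proof -
  define C where "C n = (nxt ^^ n) (star A)" for n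
  define x where "x n = pick (C n)" for n
  have gC: "good (C n)" for n
    by (induction n) (auto simp: C_def good_star A good_nxt)
  have CU: "C n \<in> U" for n using gC unfolding good_def by blast
  have xC: "x n \<in> C n" for n unfolding x_def using pick_in CU by blast
  have CSuc: "C (Suc n) = star (C n \<inter> {z. x n * z \<in> C n} \<inter> - {x n})" for n
    unfolding C_def x_def by (simp add: nxt_def)
  have Cdec1: "C (Suc n) \<subseteq> C n" for n using CSuc star_sub by blast
  have Cdec: "m \<le> n \<Longrightarrow> C n \<subseteq> C m" for m n
    using Cdec1 by (rule lift_Suc_antimono_le)
  have Cx: "C (Suc n) \<subseteq> {z. x n * z \<in> C n}" for n using CSuc star_sub by blast
  have xnot: "x n \<notin> C (Suc n)" for n using CSuc star_sub by blast
  have inj: "inj x"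
  proof (rule injI)
    fix m n assume e: "x m = x n"
    show "m = n"
    proof (rule ccontr)
      assume "m \<noteq> n"
      then consider "m < n" | "n < m" by linarith
      then show False
      proof cases
        case 1 then have "x n \<in> C (Suc m)" using xC Cdec[of "Suc m" n] by auto
        then show False using e xnot by metis
      next
        case 2 then have "x m \<in> C (Suc n)" using xC Cdec[of "Suc n" m] by auto
        then show False using e xnot by metis
      qed
    qed
  qed
  have key: "is \<noteq> [] \<Longrightarrow> sorted_wrt (<) is \<Longrightarrow> lprod (map x is) \<in> C (hd is)" for "is"
  proof (induction "is" rule: lprod.induct)
    case (1 a) then show ?case using xC by simp
  next
    case (2 a b l)
    then have IH: "lprod (map x (b # l)) \<in> C b" and ab: "a < b" by auto
    then have "lprod (map x (b # l)) \<in> C (Suc a)" using Cdec[of "Suc a" b] by auto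
    then show ?case using Cx by auto
  qed simp
  have "FP x \<subseteq> A"
  proof
    fix y assume "y \<in> FP x"
    then obtain "is" where y: "y = lprod (map x is)" "is \<noteq> []" "sorted_wrt (<) is" unfolding FP_def by blast
    then have "y \<in> C (hd is)" using key by blast
    then have "y \<in> C 0" using Cdec[of 0 "hd is"] by blast
    then show "y \<in> A" unfolding C_def using star_sub by auto
  qed
  then show ?thesis unfolding DIP_def using inj by blast
qed

end


definition FPt :: "(nat \<Rightarrow> 'a::semigroup_mult) \<Rightarrow> nat \<Rightarrow> 'a set" where
  "FPt x m = {lprod (map x is) | is. is \<noteq> [] \<and> sorted_wrt (<) is \<and> (\<forall>i\<in>set is. m \<le> i)}"

lemma FPt_0: "FPt x 0 = FP x" unfolding FPt_def FP_def by simp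

lemma FPt_mono: "m \<le> n \<Longrightarrow> FPt x n \<subseteq> FPt x m" unfolding FPt_def by fastforce

lemma FPt_single: "m \<le> n \<Longrightarrow> x n \<in> FPt x m"
  unfolding FPt_def by (rule CollectI, rule exI[of _ "[n]"]) simp

lemma FPt_infinite: "inj x \<Longrightarrow> infinite (FPt x m)"
proof
  assume "inj x" "finite (FPt x m)"
  moreover have "x ` {m..} \<subseteq> FPt x m" using FPt_single by blast
  ultimately have "finite (x ` {m..})" using finite_subset by blast
  then have "finite {m..}" using \<open>inj x\<close> finite_imageD inj_on_subset by blast
  then show False using infinite_Ici by blast
qed

lemma FPt_mult:
  assumes "y \<in> FPt x m"
  shows "\<exists>k. FPt x k \<subseteq> {z. y * z \<in> FPt x m}"
proof -
  obtain "is" where y: "y = lprod (map x is)" "is \<noteq> []" "sorted_wrt (<) is" "\<forall>i\<in>set is. m \<le> i"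
    using assms unfolding FPt_def by blast
  have "FPt x (Suc (Max (set is))) \<subseteq> {z. y * z \<in> FPt x m}"
  proof
    fix z assume "z \<in> FPt x (Suc (Max (set is)))"
    then obtain js where z: "z = lprod (map x js)" "js \<noteq> []" "sorted_wrt (<) js" "\<forall>j\<in>set js. Suc (Max (set is)) \<le> j"
      unfolding FPt_def by blast
    have lt: "\<forall>i\<in>set is. \<forall>j\<in>set js. i < j" using z(4) by (meson List.finite_set Max_ge le_less_trans lessI less_eq_Suc_le)
    have "y * z = lprod (map x (is @ js))" using y z by (simp add: lprod_append)
    moreover have "sorted_wrt (<) (is @ js)" using y z lt by (simp add: sorted_wrt_append)
    moreover have "\<forall>i\<in>set (is @ js). m \<le> i"
    proof
      fix i assume i: "i \<in> set (is @ js)"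
      have h: "hd is \<in> set is" using y(2) by simp
      show "m \<le> i"
      proof (cases "i \<in> set is")
        case True then show ?thesis using y(4) by blast
      next
        case False then have "i \<in> set js" using i by simp
        then have "hd is < i" using lt h by blast
        moreover have "m \<le> hd is" using y(4) h by blast
        ultimately show ?thesis by linarith
      qed
    qed
    ultimately show "z \<in> {z. y * z \<in> FPt x m}" unfolding FPt_def using y(2)
      by (intro CollectI exI[of _ "is @ js"]) simp
  qed
  then show ?thesis by blast
qed

lemma U_of_DIP:
  fixes A :: "'a::semigroup_mult set"
  assumes mv: "moving TYPE('a)" and D: "DIP A"
  shows "\<exists>U. is_ultrafilter U \<and> nonprincipal U \<and> idempotent_uf U \<and> A \<in> U"
proof -
  obtain x where x: "inj x" "FP x \<subseteq> A" using D unfolding DIP_def by blast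
  define G where "G = {B. \<exists>m F. finite F \<and> FPt x m - F \<subseteq> B}"
  have Gfin: "finite S \<Longrightarrow> S \<subseteq> G \<Longrightarrow> \<exists>m F. finite F \<and> FPt x m - F \<subseteq> \<Inter>S" for S
  proof (induction S rule: finite_induct)
    case empty then show ?case by blast
  next
    case (insert B S)
    then obtain m F where mF: "finite F" "FPt x m - F \<subseteq> \<Inter>S" by blast
    obtain m' F' where mF': "finite F'" "FPt x m' - F' \<subseteq> B" using insert(4) unfolding G_def by blast
    have "FPt x (max m m') - (F \<union> F') \<subseteq> \<Inter>(insert B S)"
      using mF mF' FPt_mono[of m "max m m'" x] FPt_mono[of m' "max m m'" x] by auto
    then show ?case using mF mF' by blast
  qed
  have "fip G" unfolding fip_def
  proof (intro allI impI)
    fix S assume SG0: "finite S \<and> S \<subseteq> G"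
    then obtain m F where "finite F" "FPt x m - F \<subseteq> \<Inter>S" using Gfin[of S] by blast
    moreover have "FPt x m - F \<noteq> {}" using FPt_infinite[OF x(1)] \<open>finite F\<close>
      by (metis Diff_eq_empty_iff finite_subset)
    ultimately show "\<Inter>S \<noteq> {}" by blast
  qed
  define S where "S = {U. is_ultrafilter U \<and> G \<subseteq> U}"
  have SG: "U \<in> S \<Longrightarrow> FPt x m \<in> U" for U m unfolding S_def G_def by blast
  have Snp: "U \<in> S \<Longrightarrow> nonprincipal U" for U
  proof -
    assume U: "U \<in> S"
    have aG: "- {a} \<in> G" for a unfolding G_def by (auto intro!: exI[of _ 0] exI[of _ "{a}"])
    have "- {a} \<in> U" for a using U aG[of a] unfolding S_def by blast
    moreover have "U \<noteq> principal_uf a" if "- {a} \<in> U" for a using that unfolding principal_uf_def by auto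
    ultimately show ?thesis unfolding nonprincipal_def by blast
  qed
  have "S \<noteq> {}" using ultrafilter_lemma[OF \<open>fip G\<close>] unfolding S_def by blast
  moreover have "closed_uf S" unfolding S_def by (rule closed_cl)
  moreover have "uf_mult U V \<in> S" if U: "U \<in> S" and V: "V \<in> S" for U V
  proof -
    have Uu: "is_ultrafilter U" and Vu: "is_ultrafilter V" using U V unfolding S_def by blast+
    have W: "is_ultrafilter (uf_mult U V)" using uf_mult_ultra Uu Vu by blast
    have Wn: "nonprincipal (uf_mult U V)" using mv Uu Vu Snp U V unfolding moving_def by blast
    have FW: "FPt x m \<in> uf_mult U V" for m
    proof -
      have "FPt x m \<subseteq> gset V (FPt x m)"
      proof
        fix y assume "y \<in> FPt x m"
        then obtain k where "FPt x k \<subseteq> {z. y * z \<in> FPt x m}" using FPt_mult by blast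
        then show "y \<in> gset V (FPt x m)" using SG[OF V, of k] uf_props(4)[OF Vu] by blast
      qed
      then show ?thesis using in_uf_mult SG[OF U] uf_props(4)[OF Uu] by blast
    qed
    have "G \<subseteq> uf_mult U V"
    proof
      fix B assume "B \<in> G"
      then obtain m F where "finite F" "FPt x m - F \<subseteq> B" unfolding G_def by blast
      moreover have "FPt x m - F \<in> uf_mult U V" using FW nonprinc_cofinite[OF W Wn \<open>finite F\<close>] uf_props(3)[OF W]
        by (metis Diff_eq)
      ultimately show "B \<in> uf_mult U V" using uf_props(4)[OF W] by blast
    qed
    then show ?thesis unfolding S_def using W by blast
  qed
  ultimately obtain U where U: "U \<in> S" "uf_mult U U = U" using ellis by blast
  have Uu: "is_ultrafilter U" using U(1) unfolding S_def by blast
  have "FPt x 0 \<in> U" using SG[OF U(1)] .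
  moreover have "FPt x 0 \<subseteq> A" using FPt_0[of x] x(2) by simp
  ultimately have "A \<in> U" by (rule uf_props(4)[OF Uu])
  then show ?thesis using U Snp unfolding S_def idempotent_uf_def by blast
qed

theorem mainTheorem2:
  fixes A :: "'a::semigroup_mult set"
  assumes "moving TYPE('a)"
  shows "DIP A \<longleftrightarrow>
    (\<exists>U. is_ultrafilter U \<and> nonprincipal U \<and> idempotent_uf U \<and> A \<in> U)"
  using U_of_DIP[OF assms] DIP_of_U by blast


end
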